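(* Let $\alpha\in(0,1)$, $a_0,a_1\in\mathbb{C}$, and let $\lambda_1,\lambda_2$ be the roots of $\lambda^2+a_1\lambda+a_0$. Consider ${}^LD^{2\circ\alpha}x+a_1{}^LD^\alpha x+a_0x=0$ with $x(0)=x_0$, ${}^LD^\alpha x(0)=x_{0,1}$, and let $\mathcal{S}$ be its solution space (without initial conditions). If $\lambda_1\neq\lambda_2$, the solution on $[0,\infty)$ is $$x(t)=\frac{x_{0,1}-\lambda_2x_0}{\lambda_1-\lambda_2}\mathcal{E}_\alpha(\lambda_1t)+\frac{\lambda_1x_0-x_{0,1}}{\lambda_1-\lambda_2}\mathcal{E}_\alpha(\lambda_2t),$$ and $\{\mathcal{E}_\alpha(\lambda_1t),\mathcal{E}_\alpha(\lambda_2t)\}$ is a basis of $\mathcal{S}$. If $\lambda_1=\lambda_2=\lambda$, the solution on $[0,\infty)$ is $x(t)=x_0\mathcal{E}_\alpha(\lambda t)+(x_{0,1}-\lambda x_0)\,t\,\mathcal{E}_\alpha'(\lambda t)$, and $\{\mathcal{E}_\alpha(\lambda t),t\mathcal{E}_\alpha'(\lambda t)\}$ is a basis of $\mathcal{S}$.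
   Context: $\mathcal{E}_\alpha(s)=\sum_{n=0}^\infty\frac{s^n}{\Gamma(2-\alpha)^n\prod_{j=1}^n\frac{\Gamma(j+1)}{\Gamma(j+1-\alpha)}}$ (entire), $\mathcal{E}_\alpha'$ its ordinary derivative. Solutions are taken among functions on $[0,\infty)$ given by everywhere convergent power series, with the equation holding for all $t\ge0$. ${}^LD^\alpha x(t)=\frac{\Gamma(2-\alpha)}{t^{1-\alpha}}\cdot\frac{1}{\Gamma(1-\alpha)}\int_0^t (t-\tau)^{-\alpha}x'(\tau)d\tau$ for $t>0$; on power series it acts termwise: ${}^LD^\alpha\sum_nx_nt^n=\sum_nx_{n+1}\frac{\Gamma(n+2)\Gamma(2-\alpha)}{\Gamma(n+2-\alpha)}t^n$, which also defines the value at $t=0$. ${}^LD^{2\circ\alpha}={}^LD^\alpha\circ{}^LD^\alpha$. *)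

theory Defs
  imports "HOL-Analysis.Analysis"
begin

definition Ealpha :: "real \<Rightarrow> complex \<Rightarrow> complex" where
  "Ealpha \<alpha> s = (\<Sum>n. s ^ n /
      complex_of_real (Gamma (2 - \<alpha>) ^ n *
        (\<Prod>j=1..n. Gamma (real j + 1) / Gamma (real j + 1 - \<alpha>))))"

definition Ealpha' :: "real \<Rightarrow> complex \<Rightarrow> complex" where
  "Ealpha' \<alpha> s = deriv (Ealpha \<alpha>) s"

text \<open>Functions on [0,inf) given by power series with coefficients c, convergent for all t >= 0.\<close>
definition ps_conv :: "(nat \<Rightarrow> complex) \<Rightarrow> bool" where
  "ps_conv c \<longleftrightarrow> (\<forall>t::real. 0 \<le> t \<longrightarrow> summable (\<lambda>n. c n * complex_of_real t ^ n))"

definition ps_eval :: "(nat \<Rightarrow> complex) \<Rightarrow> real \<Rightarrow> complex" where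
  "ps_eval c t = (\<Sum>n. c n * complex_of_real t ^ n)"

text \<open>Termwise action of the operator LD^alpha on power-series coefficients.\<close>
definition LD :: "real \<Rightarrow> (nat \<Rightarrow> complex) \<Rightarrow> nat \<Rightarrow> complex" where
  "LD \<alpha> c n = c (Suc n) *
     complex_of_real (Gamma (real n + 2) * Gamma (2 - \<alpha>) / Gamma (real n + 2 - \<alpha>))"

text \<open>c is (the coefficient sequence of) a solution of LD^{2 o alpha} x + a1 LD^alpha x + a0 x = 0 on [0,inf).\<close>
definition is_sol :: "real \<Rightarrow> complex \<Rightarrow> complex \<Rightarrow> (nat \<Rightarrow> complex) \<Rightarrow> bool" where
  "is_sol \<alpha> a1 a0 c \<longleftrightarrow> ps_conv c \<and> ps_conv (LD \<alpha> c) \<and> ps_conv (LD \<alpha> (LD \<alpha> c)) \<and>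
     (\<forall>t::real. 0 \<le> t \<longrightarrow>
        ps_eval (LD \<alpha> (LD \<alpha> c)) t + a1 * ps_eval (LD \<alpha> c) t + a0 * ps_eval c t = 0)"

definition is_ivp_sol :: "real \<Rightarrow> complex \<Rightarrow> complex \<Rightarrow> complex \<Rightarrow> complex \<Rightarrow> (nat \<Rightarrow> complex) \<Rightarrow> bool" where
  "is_ivp_sol \<alpha> a1 a0 x0 x01 c \<longleftrightarrow>
     is_sol \<alpha> a1 a0 c \<and> ps_eval c 0 = x0 \<and> ps_eval (LD \<alpha> c) 0 = x01"

definition sol_space :: "real \<Rightarrow> complex \<Rightarrow> complex \<Rightarrow> (real \<Rightarrow> complex) set" where
  "sol_space \<alpha> a1 a0 = {x. \<exists>c. is_sol \<alpha> a1 a0 c \<and> (\<forall>t. 0 \<le> t \<longrightarrow> x t = ps_eval c t)}"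

definition is_basis2 :: "(real \<Rightarrow> complex) set \<Rightarrow> (real \<Rightarrow> complex) \<Rightarrow> (real \<Rightarrow> complex) \<Rightarrow> bool" where
  "is_basis2 S f g \<longleftrightarrow> f \<in> S \<and> g \<in> S \<and>
     (\<forall>u v::complex. (\<forall>t::real. 0 \<le> t \<longrightarrow> u * f t + v * g t = 0) \<longrightarrow> u = 0 \<and> v = 0) \<and>
     (\<forall>x\<in>S. \<exists>u v::complex. \<forall>t::real. 0 \<le> t \<longrightarrow> x t = u * f t + v * g t)"

end

theory Submission
  imports Defs
begin



definition Dd :: "real \<Rightarrow> nat \<Rightarrow> real" where
  "Dd \<alpha> n = Gamma (2 - \<alpha>) ^ n * (\<Prod>j=1..n. Gamma (real j + 1) / Gamma (real j + 1 - \<alpha>))"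
definition ee :: "real \<Rightarrow> nat \<Rightarrow> real" where "ee \<alpha> n = inverse (Dd \<alpha> n)"
definition ec :: "real \<Rightarrow> nat \<Rightarrow> complex" where "ec \<alpha> n = complex_of_real (ee \<alpha> n)"
definition rr :: "real \<Rightarrow> nat \<Rightarrow> real" where
  "rr \<alpha> n = Gamma (real n + 2 - \<alpha>) / (Gamma (2 - \<alpha>) * Gamma (real n + 2))"

lemma Dd_pos: assumes "\<alpha> < 1" shows "Dd \<alpha> n > 0"
  unfolding Dd_def using assms
  by (intro mult_pos_pos zero_less_power prod_pos) (auto intro!: divide_pos_pos Gamma_real_pos)

lemma ee_pos: assumes "\<alpha> < 1" shows "ee \<alpha> n > 0"
  using Dd_pos[OF assms] by (simp add: ee_def)

lemma ec_nz: assumes "\<alpha> < 1" shows "ec \<alpha> n \<noteq> 0"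
  using ee_pos[OF assms, of n] by (simp add: ec_def)

lemma rr_pos: assumes "\<alpha> < 1" shows "rr \<alpha> n > 0"
  unfolding rr_def using assms by (auto intro!: divide_pos_pos mult_pos_pos Gamma_real_pos)

lemma ee_0: "ee \<alpha> 0 = 1" by (simp add: ee_def Dd_def)
lemma ec_0: "ec \<alpha> 0 = 1" by (simp add: ec_def ee_0)

lemma Dd_Suc: "Dd \<alpha> (Suc n) = Dd \<alpha> n * (Gamma (2 - \<alpha>) * Gamma (real n + 2) / Gamma (real n + 2 - \<alpha>))"
proof -
  have "(\<Prod>j=1..Suc n. Gamma (real j + 1) / Gamma (real j + 1 - \<alpha>))
     = (\<Prod>j=1..n. Gamma (real j + 1) / Gamma (real j + 1 - \<alpha>)) * (Gamma (real (Suc n) + 1) / Gamma (real (Suc n) + 1 - \<alpha>))"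
    by (simp add: prod.nat_ivl_Suc')
  moreover have "real (Suc n) + 1 = real n + 2" by simp
  ultimately show ?thesis unfolding Dd_def by (simp add: algebra_simps)
qed

lemma ee_Suc: assumes "\<alpha> < 1" shows "ee \<alpha> (Suc n) = ee \<alpha> n * rr \<alpha> n"
proof -
  have "Gamma (real n + 2 - \<alpha>) > 0" "Gamma (real n + 2) > 0" "Gamma (2 - \<alpha>) > 0" using assms by auto
  thus ?thesis unfolding ee_def rr_def Dd_Suc by (simp add: field_simps)
qed

lemma LD_rr: assumes "\<alpha> < 1" shows "LD \<alpha> c n = c (Suc n) * complex_of_real (inverse (rr \<alpha> n))"
  unfolding LD_def rr_def by (simp add: field_simps)

lemma LD_ec: assumes "\<alpha> < 1" shows "LD \<alpha> (\<lambda>n. ec \<alpha> n * d n) = (\<lambda>n. ec \<alpha> n * d (Suc n))"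
proof
  fix n
  have "rr \<alpha> n > 0" using rr_pos[OF assms] .
  thus "LD \<alpha> (\<lambda>n. ec \<alpha> n * d n) n = ec \<alpha> n * d (Suc n)"
    unfolding LD_rr[OF assms] ec_def ee_Suc[OF assms]
    by (simp add: field_simps flip: of_real_mult)
qed

lemma rr_bound: assumes "0 < \<alpha>" "\<alpha> < 1"
  shows "rr \<alpha> n \<le> (real n + 1) powr (-\<alpha>) / Gamma (2 - \<alpha>)"
proof -
  have cv: "(ln \<circ> Gamma) ((1 - (1-\<alpha>)) *\<^sub>R (real n + 1) + (1-\<alpha>) *\<^sub>R (real n + 2))
     \<le> (1 - (1-\<alpha>)) * (ln \<circ> Gamma) (real n + 1) + (1-\<alpha>) * (ln \<circ> Gamma) (real n + 2)"
    by (rule convex_onD[OF log_convex_Gamma_real]) (use assms in auto)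
  have e1: "(1 - (1-\<alpha>)) *\<^sub>R (real n + 1) + (1-\<alpha>) *\<^sub>R (real n + 2) = real n + 2 - \<alpha>"
    by (simp add: algebra_simps)
  have g2: "Gamma (real n + 2) = (real n + 1) * Gamma (real n + 1)"
  proof -
    have "real n + 1 \<notin> \<int>\<^sub>\<le>\<^sub>0" by (auto dest: nonpos_Ints_nonpos)
    from Gamma_plus1[OF this] show ?thesis by (simp add: add.assoc)
  qed
  have p1: "Gamma (real n + 1) > 0" by auto
  have l2: "ln (Gamma (real n + 2)) = ln (real n + 1) + ln (Gamma (real n + 1))"
    unfolding g2 by (rule ln_mult_pos) (use p1 in auto)
  have "ln (Gamma (real n + 2 - \<alpha>)) \<le> ln (Gamma (real n + 2)) - \<alpha> * ln (real n + 1)"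
    using cv unfolding e1 by (simp add: l2 algebra_simps)
  hence "Gamma (real n + 2 - \<alpha>) \<le> exp (ln (Gamma (real n + 2)) - \<alpha> * ln (real n + 1))"
  proof -
    assume h: "ln (Gamma (real n + 2 - \<alpha>)) \<le> ln (Gamma (real n + 2)) - \<alpha> * ln (real n + 1)"
    have "Gamma (real n + 2 - \<alpha>) > 0" using assms by (intro Gamma_real_pos) simp
    hence "Gamma (real n + 2 - \<alpha>) = exp (ln (Gamma (real n + 2 - \<alpha>)))" by simp
    also have "\<dots> \<le> exp (ln (Gamma (real n + 2)) - \<alpha> * ln (real n + 1))"
      using h by (subst exp_le_cancel_iff)
    finally show ?thesis .
  qed
  also have "\<dots> = Gamma (real n + 2) * (real n + 1) powr (-\<alpha>)"
  proof -
    have p1': "Gamma (real n + 1) \<noteq> 0" using p1 by linarith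
    have p2: "Gamma (real n + 2) > 0" by (intro Gamma_real_pos) simp
    show ?thesis using p2 by (simp add: exp_diff powr_def exp_minus divide_inverse)
  qed
  finally have "Gamma (real n + 2 - \<alpha>) \<le> Gamma (real n + 2) * (real n + 1) powr (-\<alpha>)" .
  moreover have "Gamma (2 - \<alpha>) > 0" "Gamma (real n + 2) > 0" using assms by auto
  ultimately show ?thesis unfolding rr_def by (simp add: field_simps)
qed


lemma ee_summable: assumes "0 < \<alpha>" "\<alpha> < 1" "0 \<le> x"
  shows "summable (\<lambda>n. ee \<alpha> n * (real n + 1) * x ^ n)"
proof -
  have G: "Gamma (2 - \<alpha>) > 0" using assms by auto
  have "((\<lambda>n. (real n + 1) powr (-\<alpha>)) \<longlongrightarrow> 0) sequentially"
  proof (rule tendsto_neg_powr)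
    show "filterlim (\<lambda>n. real n + 1) at_top sequentially"
      by (subst add.commute) (rule filterlim_tendsto_add_at_top[OF tendsto_const filterlim_real_sequentially])
  qed (use assms in auto)
  hence "((\<lambda>n. x * ((real n + 1) powr (-\<alpha>) / Gamma (2 - \<alpha>))) \<longlongrightarrow> x * (0 / Gamma (2 - \<alpha>))) sequentially"
    by (intro tendsto_intros) (use G in auto)
  hence "eventually (\<lambda>n. x * ((real n + 1) powr (-\<alpha>) / Gamma (2 - \<alpha>)) < 1/4) sequentially"
    by (intro order_tendstoD(2)) auto
  then obtain N where N: "\<And>n. n \<ge> N \<Longrightarrow> x * ((real n + 1) powr (-\<alpha>) / Gamma (2 - \<alpha>)) < 1/4"
    by (auto simp: eventually_sequentially)
  show ?thesis
  proof (rule summable_ratio_test[of "1/2" N])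
    fix n assume n: "n \<ge> N"
    have xr: "x * rr \<alpha> n \<le> 1/4"
      using N[OF n] mult_left_mono[OF rr_bound[OF assms(1,2), of n] assms(3)] by linarith
    have pos: "ee \<alpha> n > 0" "rr \<alpha> n > 0" using ee_pos[OF assms(2)] rr_pos[OF assms(2)] by auto
    have "rr \<alpha> n * (real n + 2) * x \<le> 2 * (real n + 1) * (x * rr \<alpha> n)"
      using pos assms(3) by (simp add: algebra_simps mult_right_mono)
    also have "\<dots> \<le> 2 * (real n + 1) * (1/4)"
      by (rule mult_left_mono[OF xr]) simp
    finally have key: "rr \<alpha> n * (real n + 2) * x \<le> 1/2 * (real n + 1)" by simp
    have "ee \<alpha> (Suc n) * (real (Suc n) + 1) * x ^ Suc n
        = (ee \<alpha> n * x ^ n) * (rr \<alpha> n * (real n + 2) * x)"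
      by (simp add: ee_Suc[OF assms(2)] algebra_simps)
    also have "\<dots> \<le> (ee \<alpha> n * x ^ n) * (1/2 * (real n + 1))"
      by (rule mult_left_mono[OF key]) (use pos assms(3) in auto)
    finally have F: "ee \<alpha> (Suc n) * (real (Suc n) + 1) * x ^ Suc n \<le> (ee \<alpha> n * x ^ n) * (1/2 * (real n + 1))" .
    have n1: "0 \<le> ee \<alpha> (Suc n) * (real (Suc n) + 1) * x ^ Suc n"
      using ee_pos[OF assms(2), of "Suc n"] assms(3) by simp
    have n2: "0 \<le> ee \<alpha> n * (real n + 1) * x ^ n"
      using pos assms(3) by simp
    show "norm (ee \<alpha> (Suc n) * (real (Suc n) + 1) * x ^ Suc n)
        \<le> 1/2 * norm (ee \<alpha> n * (real n + 1) * x ^ n)"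
      unfolding real_norm_def abs_of_nonneg[OF n1] abs_of_nonneg[OF n2] using F by (simp add: algebra_simps)
  qed simp
qed

lemma conv_bound:
  assumes "0 < \<alpha>" "\<alpha> < 1" "0 \<le> R" and b: "\<And>n. norm (d n) \<le> K * (real n + 1) * R ^ n"
  shows "summable (\<lambda>n. ec \<alpha> n * d n * z ^ n)"
proof -
  have "norm (d 0) \<le> K" using b[of 0] by simp
  hence K: "K \<ge> 0" using norm_ge_zero[of "d 0"] by linarith
  have s: "summable (\<lambda>n. K * (ee \<alpha> n * (real n + 1) * (R * norm z) ^ n))"
    by (intro summable_mult ee_summable) (use assms in auto)
  show ?thesis
  proof (rule summable_comparison_test'[OF s])
    fix n
    have "norm (ec \<alpha> n * d n * z ^ n) = ee \<alpha> n * norm (d n) * norm z ^ n"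
      using ee_pos[OF assms(2), of n] by (simp add: ec_def norm_mult norm_power)
    also have "\<dots> \<le> ee \<alpha> n * (K * (real n + 1) * R ^ n) * norm z ^ n"
      using ee_pos[OF assms(2), of n] b[of n]
      by (intro mult_right_mono mult_left_mono) auto
    also have "\<dots> = K * (ee \<alpha> n * (real n + 1) * (R * norm z) ^ n)"
      by (simp add: power_mult_distrib algebra_simps)
    finally show "norm (ec \<alpha> n * d n * z ^ n) \<le> K * (ee \<alpha> n * (real n + 1) * (R * norm z) ^ n)" .
  qed
qed





lemma Ealpha_ec: "Ealpha \<alpha> s = (\<Sum>n. ec \<alpha> n * s ^ n)"
proof -
  have "\<And>n. s ^ n / complex_of_real (Dd \<alpha> n) = ec \<alpha> n * s ^ n"
    by (simp add: ec_def ee_def divide_inverse of_real_inverse mult.commute)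
  thus ?thesis unfolding Ealpha_def Dd_def[symmetric] by simp
qed

lemma ec_summable: assumes "0 < \<alpha>" "\<alpha> < 1" shows "summable (\<lambda>n. ec \<alpha> n * z ^ n)"
  using conv_bound[OF assms, of 1 "\<lambda>_. 1" 1 z] by simp

lemma Ealpha'_eq: assumes "0 < \<alpha>" "\<alpha> < 1" shows "Ealpha' \<alpha> s = (\<Sum>n. diffs (ec \<alpha>) n * s ^ n)"
proof -
  have "Ealpha \<alpha> = (\<lambda>s. \<Sum>n. ec \<alpha> n * s ^ n)" by (rule ext) (rule Ealpha_ec)
  moreover have "((\<lambda>s. \<Sum>n. ec \<alpha> n * s ^ n) has_field_derivative (\<Sum>n. diffs (ec \<alpha>) n * s ^ n)) (at s)"
    by (rule termdiffs_strong_converges_everywhere) (rule ec_summable[OF assms])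
  ultimately show ?thesis unfolding Ealpha'_def by (simp add: DERIV_imp_deriv)
qed

lemma ps_zero:
  fixes b :: "nat \<Rightarrow> complex"
  assumes sm: "\<And>z. summable (\<lambda>n. b n * z ^ n)"
    and z: "\<And>t::real. 0 \<le> t \<Longrightarrow> (\<Sum>n. b n * complex_of_real t ^ n) = 0"
  shows "b k = 0"
proof (induction k rule: less_induct)
  case (less k)
  define g where "g z = (\<Sum>n. b (n+k) * z ^ n)" for z
  have smk: "\<And>z. summable (\<lambda>n. b (n+k) * z ^ n)"
    by (subst summable_powser_ignore_initial_segment) (rule sm)
  have split: "(\<Sum>n. b n * z ^ n) = z ^ k * g z" for z
  proof -
    have "(\<Sum>n. b n * z ^ n) = (\<Sum>n. b (n+k) * z ^ (n+k)) + (\<Sum>i<k. b i * z ^ i)"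
      by (rule suminf_split_initial_segment[OF sm])
    also have "(\<Sum>i<k. b i * z ^ i) = 0" using less by simp
    also have "(\<Sum>n. b (n+k) * z ^ (n+k)) = z ^ k * g z"
      unfolding g_def by (subst suminf_mult[OF smk, symmetric]) (simp add: power_add algebra_simps)
    finally show ?thesis by simp
  qed
  have g0: "g 0 = b k" unfolding g_def using powser_zero[of "\<lambda>n. b (n+k)"] by simp
  have gz: "g (complex_of_real t) = 0" if "t > 0" for t
    using z[of t] split[of "complex_of_real t"] that by simp
  have cont: "isCont g 0" unfolding g_def
    by (rule isCont_powser_converges_everywhere) (rule smk)
  have cont': "isCont g (complex_of_real 0)" using cont by simp
  have lim0: "((\<lambda>t::real. complex_of_real t) \<longlongrightarrow> complex_of_real 0) (at_right 0)"
    by (intro tendsto_of_real tendsto_ident_at)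
  have "((\<lambda>t::real. g (complex_of_real t)) \<longlongrightarrow> g (complex_of_real 0)) (at_right 0)"
    by (rule isCont_tendsto_compose[OF cont' lim0])
  hence lim: "((\<lambda>t::real. g (complex_of_real t)) \<longlongrightarrow> g 0) (at_right 0)" by simp
  have ev: "eventually (\<lambda>t::real. g (complex_of_real t) = 0) (at_right 0)"
    by (rule eventually_mono[OF eventually_at_right_less]) (rule gz)
  have "((\<lambda>t::real. 0) \<longlongrightarrow> g 0) (at_right 0)"
    using lim by (subst (asm) tendsto_cong[OF ev])
  hence "0 = g 0" by (rule tendsto_const_iff[OF trivial_limit_at_right_real, THEN iffD1])
  thus ?case using g0 by simp
qed


lemma ps_eval_exp: "ps_eval (\<lambda>n. ec \<alpha> n * l ^ n) t = Ealpha \<alpha> (l * complex_of_real t)"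
  unfolding ps_eval_def Ealpha_ec by (simp only: power_mult_distrib mult.assoc)

lemma ps_eval_texp: assumes "0 < \<alpha>" "\<alpha> < 1"
  shows "ps_eval (\<lambda>n. ec \<alpha> n * (of_nat n * l ^ (n - 1))) t
        = complex_of_real t * Ealpha' \<alpha> (l * complex_of_real t)"
proof -
  let ?f = "\<lambda>n. ec \<alpha> n * (of_nat n * l ^ (n - 1))"
  have bd: "norm (of_nat n * l ^ (n - 1)) \<le> 1 * (real n + 1) * max 1 (norm l) ^ n" for n
  proof -
    have "norm l ^ (n-1) \<le> max 1 (norm l) ^ (n-1)" by (intro power_mono) auto
    also have "\<dots> \<le> max 1 (norm l) ^ n" by (intro power_increasing) auto
    finally have h: "norm l ^ (n-1) \<le> max 1 (norm l) ^ n" .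
    have "norm (of_nat n * l ^ (n - 1)) = real n * norm l ^ (n-1)" by (simp add: norm_mult norm_power)
    also have "\<dots> \<le> (real n + 1) * max 1 (norm l) ^ n"
      by (rule mult_mono) (use h in auto)
    finally show ?thesis by simp
  qed
  have sm: "summable (\<lambda>n. ?f n * complex_of_real t ^ n)"
    using conv_bound[OF assms _ bd] by (simp add: mult.assoc)
  have "ps_eval ?f t = ?f 0 + (\<Sum>n. ?f (Suc n) * complex_of_real t ^ n) * complex_of_real t"
    unfolding ps_eval_def by (rule powser_split_head(1)[OF sm])
  also have "(\<lambda>n. ?f (Suc n) * complex_of_real t ^ n) = (\<lambda>n. diffs (ec \<alpha>) n * (l * complex_of_real t) ^ n)"
    by (rule ext) (simp add: diffs_def power_mult_distrib ac_simps)
  finally show ?thesis unfolding Ealpha'_eq[OF assms] by (simp add: mult.commute)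
qed




lemma ps_conv_all: assumes "ps_conv c" shows "summable (\<lambda>n. c n * z ^ n)"
proof -
  have "0 \<le> norm z + 1" by simp
  from assms[unfolded ps_conv_def, rule_format, OF this]
  have "summable (\<lambda>n. c n * complex_of_real (norm z + 1) ^ n)" .
  thus ?thesis by (rule powser_inside) simp
qed

lemma ps_lin:
  assumes "summable (\<lambda>n. A n * complex_of_real t ^ n)" "summable (\<lambda>n. B n * complex_of_real t ^ n)"
  shows "ps_eval (\<lambda>n. u * A n + v * B n) t = u * ps_eval A t + v * ps_eval B t"
    and "summable (\<lambda>n. (u * A n + v * B n) * complex_of_real t ^ n)"
proof -
  let ?T = "complex_of_real t"
  have e: "(\<lambda>n. (u * A n + v * B n) * ?T ^ n) = (\<lambda>n. u * (A n * ?T ^ n) + v * (B n * ?T ^ n))"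
    by (rule ext) (simp add: algebra_simps)
  have s1: "summable (\<lambda>n. u * (A n * ?T ^ n))" by (rule summable_mult) (rule assms(1))
  have s2: "summable (\<lambda>n. v * (B n * ?T ^ n))" by (rule summable_mult) (rule assms(2))
  show "summable (\<lambda>n. (u * A n + v * B n) * complex_of_real t ^ n)"
    unfolding e by (rule summable_add[OF s1 s2])
  have "ps_eval (\<lambda>n. u * A n + v * B n) t = (\<Sum>n. u * (A n * ?T ^ n)) + (\<Sum>n. v * (B n * ?T ^ n))"
    unfolding ps_eval_def e by (rule suminf_add[OF s1 s2, symmetric])
  also have "\<dots> = u * ps_eval A t + v * ps_eval B t"
    unfolding ps_eval_def using suminf_mult[OF assms(1), of u] suminf_mult[OF assms(2), of v] by simp
  finally show "ps_eval (\<lambda>n. u * A n + v * B n) t = u * ps_eval A t + v * ps_eval B t" .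
qed

lemma ec_decomp: assumes "\<alpha> < 1" shows "c = (\<lambda>n. ec \<alpha> n * (c n / ec \<alpha> n))"
  using ec_nz[OF assms] by (simp add: fun_eq_iff)

lemma ps_eval_0: "ps_eval c 0 = c 0"
  unfolding ps_eval_def using powser_zero[of c] by simp

lemma sol_rec:
  assumes "0 < \<alpha>" "\<alpha> < 1" and sol: "is_sol \<alpha> a1 a0 (\<lambda>n. ec \<alpha> n * d n)"
  shows "d (Suc (Suc n)) + a1 * d (Suc n) + a0 * d n = 0"
proof -
  let ?c = "\<lambda>n. ec \<alpha> n * d n"
  have L1: "LD \<alpha> ?c = (\<lambda>n. ec \<alpha> n * d (Suc n))" by (rule LD_ec[OF assms(2)])
  have L2: "LD \<alpha> (\<lambda>n. ec \<alpha> n * d (Suc n)) = (\<lambda>n. ec \<alpha> n * d (Suc (Suc n)))"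
    by (rule LD_ec[OF assms(2)])
  from sol have c0: "ps_conv ?c" and c1: "ps_conv (\<lambda>n. ec \<alpha> n * d (Suc n))"
    and c2: "ps_conv (\<lambda>n. ec \<alpha> n * d (Suc (Suc n)))"
    and eq: "\<And>t. 0 \<le> t \<Longrightarrow> ps_eval (\<lambda>n. ec \<alpha> n * d (Suc (Suc n))) t
        + a1 * ps_eval (\<lambda>n. ec \<alpha> n * d (Suc n)) t + a0 * ps_eval ?c t = 0"
    unfolding is_sol_def L1 L2 by auto
  define b where "b n = 1 * (ec \<alpha> n * d (Suc (Suc n))) + 1 * (a1 * (ec \<alpha> n * d (Suc n)) + a0 * (ec \<alpha> n * d n))" for n
  have sb: "summable (\<lambda>n. b n * z ^ n)" for z
  proof -
    have t0: "0 \<le> norm z + 1" by simp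
    have x0: "summable (\<lambda>n. ec \<alpha> n * d n * complex_of_real (norm z + 1) ^ n)"
      using c0[unfolded ps_conv_def, rule_format, OF t0] .
    have x1: "summable (\<lambda>n. ec \<alpha> n * d (Suc n) * complex_of_real (norm z + 1) ^ n)"
      using c1[unfolded ps_conv_def, rule_format, OF t0] .
    have x2: "summable (\<lambda>n. ec \<alpha> n * d (Suc (Suc n)) * complex_of_real (norm z + 1) ^ n)"
      using c2[unfolded ps_conv_def, rule_format, OF t0] .
    have "summable (\<lambda>n. b n * complex_of_real (norm z + 1) ^ n)"
      unfolding b_def by (rule ps_lin(2)[OF x2 ps_lin(2)[OF x1 x0]])
    thus ?thesis by (rule powser_inside) simp
  qed
  have zb: "(\<Sum>n. b n * complex_of_real t ^ n) = 0" if t: "0 \<le> t" for t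
  proof -
    have s1: "summable (\<lambda>n. (a1 * (ec \<alpha> n * d (Suc n)) + a0 * (ec \<alpha> n * d n)) * complex_of_real t ^ n)"
      by (rule ps_lin(2)) (use c0 c1 t in \<open>auto simp: ps_conv_def\<close>)
    have "(\<Sum>n. b n * complex_of_real t ^ n) = ps_eval b t" by (simp add: ps_eval_def)
    also have "\<dots> = 1 * ps_eval (\<lambda>n. ec \<alpha> n * d (Suc (Suc n))) t
        + 1 * ps_eval (\<lambda>n. a1 * (ec \<alpha> n * d (Suc n)) + a0 * (ec \<alpha> n * d n)) t"
      unfolding b_def by (rule ps_lin(1)) (use c2 t s1 in \<open>auto simp: ps_conv_def\<close>)
    also have "ps_eval (\<lambda>n. a1 * (ec \<alpha> n * d (Suc n)) + a0 * (ec \<alpha> n * d n)) t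
        = a1 * ps_eval (\<lambda>n. ec \<alpha> n * d (Suc n)) t + a0 * ps_eval ?c t"
      by (rule ps_lin(1)) (use c0 c1 t in \<open>auto simp: ps_conv_def\<close>)
    finally show ?thesis using eq[OF t] by (simp add: add.assoc)
  qed
  have "b n = 0" by (rule ps_zero[OF sb zb])
  hence "ec \<alpha> n * (d (Suc (Suc n)) + a1 * d (Suc n) + a0 * d n) = 0"
    unfolding b_def by (simp add: algebra_simps)
  thus ?thesis using ec_nz[OF assms(2), of n] by simp
qed

lemma sol_from_rec:
  assumes "0 < \<alpha>" "\<alpha> < 1" and rec: "\<And>n. d (Suc (Suc n)) + a1 * d (Suc n) + a0 * d n = 0"
    and R: "0 \<le> R"
    and b0: "\<And>n. norm (d n) \<le> K0 * (real n + 1) * R ^ n"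
    and b1: "\<And>n. norm (d (Suc n)) \<le> K1 * (real n + 1) * R ^ n"
    and b2: "\<And>n. norm (d (Suc (Suc n))) \<le> K2 * (real n + 1) * R ^ n"
  shows "is_sol \<alpha> a1 a0 (\<lambda>n. ec \<alpha> n * d n)"
proof -
  let ?c = "\<lambda>n. ec \<alpha> n * d n"
  have L1: "LD \<alpha> ?c = (\<lambda>n. ec \<alpha> n * d (Suc n))" by (rule LD_ec[OF assms(2)])
  have L2: "LD \<alpha> (\<lambda>n. ec \<alpha> n * d (Suc n)) = (\<lambda>n. ec \<alpha> n * d (Suc (Suc n)))"
    by (rule LD_ec[OF assms(2)])
  have s0: "summable (\<lambda>n. ec \<alpha> n * d n * z ^ n)" for z by (rule conv_bound[OF assms(1,2) R b0])
  have s1: "summable (\<lambda>n. ec \<alpha> n * d (Suc n) * z ^ n)" for z by (rule conv_bound[OF assms(1,2) R b1])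
  have s2: "summable (\<lambda>n. ec \<alpha> n * d (Suc (Suc n)) * z ^ n)" for z by (rule conv_bound[OF assms(1,2) R b2])
  have eq: "ps_eval (\<lambda>n. ec \<alpha> n * d (Suc (Suc n))) t
        + a1 * ps_eval (\<lambda>n. ec \<alpha> n * d (Suc n)) t + a0 * ps_eval ?c t = 0" for t
  proof -
    have s3: "summable (\<lambda>n. (a1 * (ec \<alpha> n * d (Suc n)) + a0 * (ec \<alpha> n * d n)) * complex_of_real t ^ n)"
      by (rule ps_lin(2)) (use s0 s1 in auto)
    have "ps_eval (\<lambda>n. 1 * (ec \<alpha> n * d (Suc (Suc n))) + 1 * (a1 * (ec \<alpha> n * d (Suc n)) + a0 * (ec \<alpha> n * d n))) t
       = 1 * ps_eval (\<lambda>n. ec \<alpha> n * d (Suc (Suc n))) t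
        + 1 * ps_eval (\<lambda>n. a1 * (ec \<alpha> n * d (Suc n)) + a0 * (ec \<alpha> n * d n)) t"
      by (rule ps_lin(1)) (use s2 s3 in auto)
    also have "ps_eval (\<lambda>n. a1 * (ec \<alpha> n * d (Suc n)) + a0 * (ec \<alpha> n * d n)) t
        = a1 * ps_eval (\<lambda>n. ec \<alpha> n * d (Suc n)) t + a0 * ps_eval ?c t"
      by (rule ps_lin(1)) (use s0 s1 in auto)
    also have "(\<lambda>n. 1 * (ec \<alpha> n * d (Suc (Suc n))) + 1 * (a1 * (ec \<alpha> n * d (Suc n)) + a0 * (ec \<alpha> n * d n)))
        = (\<lambda>n. 0)"
    proof
      fix n
      have "ec \<alpha> n * (d (Suc (Suc n)) + a1 * d (Suc n) + a0 * d n) = 0" using rec[of n] by simp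
      thus "1 * (ec \<alpha> n * d (Suc (Suc n))) + 1 * (a1 * (ec \<alpha> n * d (Suc n)) + a0 * (ec \<alpha> n * d n)) = 0"
        by (simp add: algebra_simps)
    qed
    finally show ?thesis by (simp add: ps_eval_def add.assoc)
  qed
  show ?thesis
    unfolding is_sol_def L1 L2 ps_conv_def using s0 s1 s2 eq by auto
qed




lemma LD_lin: "LD \<alpha> (\<lambda>n. u * A n + v * B n) = (\<lambda>n. u * LD \<alpha> A n + v * LD \<alpha> B n)"
  by (rule ext) (simp only: LD_def distrib_right mult.assoc)

lemma sol_lin:
  assumes A: "is_sol \<alpha> a1 a0 A" and B: "is_sol \<alpha> a1 a0 B"
  shows "is_sol \<alpha> a1 a0 (\<lambda>n. u * A n + v * B n)"
proof -
  from A have A0: "ps_conv A" and A1: "ps_conv (LD \<alpha> A)" and A2: "ps_conv (LD \<alpha> (LD \<alpha> A))"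
    and Ae: "\<And>t. 0 \<le> t \<Longrightarrow> ps_eval (LD \<alpha> (LD \<alpha> A)) t + a1 * ps_eval (LD \<alpha> A) t + a0 * ps_eval A t = 0"
    unfolding is_sol_def by auto
  from B have B0: "ps_conv B" and B1: "ps_conv (LD \<alpha> B)" and B2: "ps_conv (LD \<alpha> (LD \<alpha> B))"
    and Be: "\<And>t. 0 \<le> t \<Longrightarrow> ps_eval (LD \<alpha> (LD \<alpha> B)) t + a1 * ps_eval (LD \<alpha> B) t + a0 * ps_eval B t = 0"
    unfolding is_sol_def by auto
  have L2: "LD \<alpha> (LD \<alpha> (\<lambda>n. u * A n + v * B n)) = (\<lambda>n. u * LD \<alpha> (LD \<alpha> A) n + v * LD \<alpha> (LD \<alpha> B) n)"
    by (simp only: LD_lin)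
  have pc: "ps_conv (\<lambda>n. u * X n + v * Y n)" if "ps_conv X" "ps_conv Y" for X Y
    unfolding ps_conv_def using that unfolding ps_conv_def by (auto intro: ps_lin(2))
  have pe: "ps_eval (\<lambda>n. u * X n + v * Y n) t = u * ps_eval X t + v * ps_eval Y t"
    if "ps_conv X" "ps_conv Y" "0 \<le> t" for X Y t
    using that unfolding ps_conv_def by (auto intro: ps_lin(1))
  show ?thesis
    unfolding is_sol_def LD_lin L2
  proof (intro conjI allI impI)
    show "ps_conv (\<lambda>n. u * A n + v * B n)" by (rule pc[OF A0 B0])
    show "ps_conv (\<lambda>n. u * LD \<alpha> A n + v * LD \<alpha> B n)" by (rule pc[OF A1 B1])
    show "ps_conv (\<lambda>n. u * LD \<alpha> (LD \<alpha> A) n + v * LD \<alpha> (LD \<alpha> B) n)" by (rule pc[OF A2 B2])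
    fix t :: real assume t: "0 \<le> t"
    have "ps_eval (\<lambda>n. u * LD \<alpha> (LD \<alpha> A) n + v * LD \<alpha> (LD \<alpha> B) n) t +
      a1 * ps_eval (\<lambda>n. u * LD \<alpha> A n + v * LD \<alpha> B n) t + a0 * ps_eval (\<lambda>n. u * A n + v * B n) t
      = u * (ps_eval (LD \<alpha> (LD \<alpha> A)) t + a1 * ps_eval (LD \<alpha> A) t + a0 * ps_eval A t)
      + v * (ps_eval (LD \<alpha> (LD \<alpha> B)) t + a1 * ps_eval (LD \<alpha> B) t + a0 * ps_eval B t)"
      unfolding pe[OF A0 B0 t] pe[OF A1 B1 t] pe[OF A2 B2 t] by (simp add: algebra_simps)
    also have "\<dots> = 0" using Ae[OF t] Be[OF t] by simp
    finally show "ps_eval (\<lambda>n. u * LD \<alpha> (LD \<alpha> A) n + v * LD \<alpha> (LD \<alpha> B) n) t +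
      a1 * ps_eval (\<lambda>n. u * LD \<alpha> A n + v * LD \<alpha> B n) t + a0 * ps_eval (\<lambda>n. u * A n + v * B n) t = 0" .
  qed
qed

lemma exp_bd: "norm ((l::complex) ^ n) \<le> 1 * (real n + 1) * norm l ^ n"
  "norm (l ^ Suc n) \<le> norm l * (real n + 1) * norm l ^ n"
  "norm (l ^ Suc (Suc n)) \<le> norm l ^ 2 * (real n + 1) * norm l ^ n"
proof -
  have h: "norm l ^ n \<le> (real n + 1) * norm l ^ n"
    using mult_right_mono[of 1 "real n + 1" "norm l ^ n"] by simp
  show "norm ((l::complex) ^ n) \<le> 1 * (real n + 1) * norm l ^ n" using h by (simp add: norm_power)
  show "norm (l ^ Suc n) \<le> norm l * (real n + 1) * norm l ^ n"
    using mult_left_mono[OF h, of "norm l"] by (simp add: norm_power norm_mult algebra_simps)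
  show "norm (l ^ Suc (Suc n)) \<le> norm l ^ 2 * (real n + 1) * norm l ^ n"
    using mult_left_mono[OF h, of "norm l ^ 2"] by (simp add: norm_power norm_mult power2_eq_square algebra_simps)
qed

lemma q_bd: fixes l :: complex defines "M \<equiv> max 1 (norm l)"
  shows "norm (of_nat n * l ^ (n - 1)) \<le> 1 * (real n + 1) * M ^ n"
    "norm (of_nat (Suc n) * l ^ (Suc n - 1)) \<le> 1 * (real n + 1) * M ^ n"
    "norm (of_nat (Suc (Suc n)) * l ^ (Suc (Suc n) - 1)) \<le> (2 * M) * (real n + 1) * M ^ n"
proof -
  have M1: "1 \<le> M" unfolding M_def by simp
  have lM: "norm l \<le> M" unfolding M_def by simp
  have pw: "norm l ^ k \<le> M ^ k" for k by (intro power_mono lM) simp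
  have "norm l ^ (n-1) \<le> M ^ (n-1)" by (rule pw)
  also have "\<dots> \<le> M ^ n" by (intro power_increasing M1) simp
  finally have h: "norm l ^ (n-1) \<le> M ^ n" .
  have "norm (of_nat n * l ^ (n - 1)) = real n * norm l ^ (n-1)" by (simp add: norm_mult norm_power)
  also have "\<dots> \<le> (real n + 1) * M ^ n" by (rule mult_mono) (use h in auto)
  finally show "norm (of_nat n * l ^ (n - 1)) \<le> 1 * (real n + 1) * M ^ n" by simp
  have "norm (of_nat (Suc n) * l ^ (Suc n - 1)) = real (Suc n) * norm l ^ n"
    by (simp add: norm_mult norm_power del: of_nat_Suc)
  also have "\<dots> = (real n + 1) * norm l ^ n" by simp
  also have "\<dots> \<le> (real n + 1) * M ^ n" by (rule mult_left_mono[OF pw]) simp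
  finally show "norm (of_nat (Suc n) * l ^ (Suc n - 1)) \<le> 1 * (real n + 1) * M ^ n" by simp
  have "norm (of_nat (Suc (Suc n)) * l ^ (Suc (Suc n) - 1)) = real (Suc (Suc n)) * norm l ^ Suc n"
    by (simp add: norm_mult norm_power del: of_nat_Suc)
  also have "\<dots> = (real n + 2) * norm l ^ Suc n" by simp
  also have "\<dots> \<le> (2 * (real n + 1)) * M ^ Suc n"
    by (rule mult_mono[OF _ pw[of "Suc n"]]) auto
  also have "\<dots> = (2 * M) * (real n + 1) * M ^ n" by (simp add: algebra_simps)
  finally show "norm (of_nat (Suc (Suc n)) * l ^ (Suc (Suc n) - 1)) \<le> (2 * M) * (real n + 1) * M ^ n" .
qed

lemma exp_sol: assumes "0 < \<alpha>" "\<alpha> < 1" "l ^ 2 + a1 * l + a0 = 0"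
  shows "is_sol \<alpha> a1 a0 (\<lambda>n. ec \<alpha> n * l ^ n)"
proof (rule sol_from_rec[OF assms(1,2) _ _ exp_bd])
  fix n
  have "l ^ Suc (Suc n) + a1 * l ^ Suc n + a0 * l ^ n = l ^ n * (l ^ 2 + a1 * l + a0)"
    by (simp add: algebra_simps power2_eq_square)
  thus "l ^ Suc (Suc n) + a1 * l ^ Suc n + a0 * l ^ n = 0" using assms(3) by simp
qed simp

lemma texp_sol: assumes "0 < \<alpha>" "\<alpha> < 1" "a1 = - (l + l)" "a0 = l * l"
  shows "is_sol \<alpha> a1 a0 (\<lambda>n. ec \<alpha> n * (of_nat n * l ^ (n - 1)))"
proof (rule sol_from_rec[OF assms(1,2) _ _ q_bd])
  fix n
  show "of_nat (Suc (Suc n)) * l ^ (Suc (Suc n) - 1) + a1 * (of_nat (Suc n) * l ^ (Suc n - 1))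
        + a0 * (of_nat n * l ^ (n - 1)) = 0"
  proof (cases n)
    case 0 thus ?thesis using assms(3,4) by simp
  next
    case (Suc k) thus ?thesis using assms(3,4) by (simp add: algebra_simps)
  qed
qed simp

lemma rec_distinct:
  fixes d :: "nat \<Rightarrow> complex"
  assumes ne: "l1 \<noteq> l2" and rec: "\<And>n. d (Suc (Suc n)) = (l1 + l2) * d (Suc n) - l1 * l2 * d n"
    and u: "u = (d 1 - l2 * d 0) / (l1 - l2)" and v: "v = (l1 * d 0 - d 1) / (l1 - l2)"
  shows "d n = u * l1 ^ n + v * l2 ^ n"
proof (induction n rule: less_induct)
  case (less n)
  have nz: "l1 - l2 \<noteq> 0" using ne by simp
  show ?case
  proof (cases n)
    case 0
    have "u * l1 ^ 0 + v * l2 ^ 0 = ((d 1 - l2 * d 0) + (l1 * d 0 - d 1)) / (l1 - l2)"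
      unfolding u v by (simp only: power_0 mult_1_right add_divide_distrib)
    also have "(d 1 - l2 * d 0) + (l1 * d 0 - d 1) = d 0 * (l1 - l2)" by (simp add: algebra_simps)
    also have "d 0 * (l1 - l2) / (l1 - l2) = d 0" by (rule nonzero_mult_div_cancel_right[OF nz])
    finally show ?thesis using 0 by simp
  next
    case (Suc m)
    show ?thesis
    proof (cases m)
      case 0
      have "u * l1 ^ 1 + v * l2 ^ 1 = ((d 1 - l2 * d 0) * l1 + (l1 * d 0 - d 1) * l2) / (l1 - l2)"
        unfolding u v by (simp only: power_one_right times_divide_eq_left add_divide_distrib)
      also have "(d 1 - l2 * d 0) * l1 + (l1 * d 0 - d 1) * l2 = d 1 * (l1 - l2)" by (simp add: algebra_simps)
      also have "d 1 * (l1 - l2) / (l1 - l2) = d 1" by (rule nonzero_mult_div_cancel_right[OF nz])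
      finally show ?thesis using 0 Suc by simp
    next
      case (Suc k)
      have i1: "d (Suc k) = u * l1 ^ Suc k + v * l2 ^ Suc k" using less[of "Suc k"] \<open>n = Suc m\<close> Suc by simp
      have i0: "d k = u * l1 ^ k + v * l2 ^ k" using less[of k] \<open>n = Suc m\<close> Suc by simp
      have "d n = (l1 + l2) * d (Suc k) - l1 * l2 * d k" using rec[of k] \<open>n = Suc m\<close> Suc by simp
      also have "\<dots> = u * l1 ^ n + v * l2 ^ n"
        unfolding i1 i0 using \<open>n = Suc m\<close> Suc by (simp add: algebra_simps)
      finally show ?thesis .
    qed
  qed
qed

lemma rec_double:
  fixes d :: "nat \<Rightarrow> complex"
  assumes rec: "\<And>n. d (Suc (Suc n)) = (l + l) * d (Suc n) - l * l * d n"
  shows "d n = d 0 * l ^ n + (d 1 - l * d 0) * (of_nat n * l ^ (n - 1))"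
proof (induction n rule: less_induct)
  case (less n)
  show ?case
  proof (cases n)
    case 0 thus ?thesis by simp
  next
    case (Suc m)
    show ?thesis
    proof (cases m)
      case 0 thus ?thesis using Suc by (simp add: algebra_simps)
    next
      case (Suc k)
      have i1: "d (Suc k) = d 0 * l ^ Suc k + (d 1 - l * d 0) * (of_nat (Suc k) * l ^ k)"
        using less[of "Suc k"] \<open>n = Suc m\<close> Suc by simp
      have i0: "d k = d 0 * l ^ k + (d 1 - l * d 0) * (of_nat k * l ^ (k - 1))"
        using less[of k] \<open>n = Suc m\<close> Suc by simp
      have "d n = (l + l) * d (Suc k) - l * l * d k" using rec[of k] \<open>n = Suc m\<close> Suc by simp
      also have "\<dots> = d 0 * l ^ n + (d 1 - l * d 0) * (of_nat n * l ^ (n - 1))"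
      proof (cases k)
        case 0 thus ?thesis unfolding i1 i0 using \<open>n = Suc m\<close> Suc by (simp add: algebra_simps)
      next
        case (Suc j) thus ?thesis unfolding i1 i0 using \<open>n = Suc m\<close> \<open>m = Suc k\<close> by (simp add: algebra_simps)
      qed
      finally show ?thesis .
    qed
  qed
qed




lemma sol_d:
  assumes "0 < \<alpha>" "\<alpha> < 1" "a1 = - (l1 + l2)" "a0 = l1 * l2" "is_sol \<alpha> a1 a0 c"
    and dd: "\<And>n. d n = c n / ec \<alpha> n"
  shows "c = (\<lambda>n. ec \<alpha> n * d n)" "\<And>n. d (Suc (Suc n)) = (l1 + l2) * d (Suc n) - l1 * l2 * d n"
    "ps_eval c 0 = d 0" "ps_eval (LD \<alpha> c) 0 = d 1"
proof -
  show cd: "c = (\<lambda>n. ec \<alpha> n * d n)" using ec_nz[OF assms(2)] by (simp add: dd fun_eq_iff)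
  have sol: "is_sol \<alpha> a1 a0 (\<lambda>n. ec \<alpha> n * d n)" using assms(5) cd by simp
  fix n
  have h: "d (Suc (Suc n)) + a1 * d (Suc n) + a0 * d n = 0" by (rule sol_rec[OF assms(1,2) sol])
  have "d (Suc (Suc n)) = d (Suc (Suc n)) - (d (Suc (Suc n)) + a1 * d (Suc n) + a0 * d n)" using h by simp
  also have "\<dots> = (l1 + l2) * d (Suc n) - l1 * l2 * d n" unfolding assms(3,4) by (simp add: algebra_simps)
  finally show "d (Suc (Suc n)) = (l1 + l2) * d (Suc n) - l1 * l2 * d n" .
  show "ps_eval c 0 = d 0" by (subst cd) (simp add: ps_eval_0 ec_0)
  show "ps_eval (LD \<alpha> c) 0 = d 1" by (subst cd) (simp add: LD_ec[OF assms(2)] ps_eval_0 ec_0)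
qed

lemma repr_distinct:
  assumes "0 < \<alpha>" "\<alpha> < 1" "l1 \<noteq> l2" "a1 = - (l1 + l2)" "a0 = l1 * l2" "is_sol \<alpha> a1 a0 c"
  shows "ps_eval c t = (ps_eval (LD \<alpha> c) 0 - l2 * ps_eval c 0) / (l1 - l2) * Ealpha \<alpha> (l1 * complex_of_real t)
     + (l1 * ps_eval c 0 - ps_eval (LD \<alpha> c) 0) / (l1 - l2) * Ealpha \<alpha> (l2 * complex_of_real t)"
proof -
  define d where "d = (\<lambda>n. c n / ec \<alpha> n)"
  have dd: "\<And>n. d n = c n / ec \<alpha> n" by (simp add: d_def)
  note sd = sol_d[OF assms(1,2,4,5,6) dd]
  define u where "u = (d 1 - l2 * d 0) / (l1 - l2)"
  define v where "v = (l1 * d 0 - d 1) / (l1 - l2)"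
  have dn: "d n = u * l1 ^ n + v * l2 ^ n" for n by (rule rec_distinct[OF assms(3) sd(2) u_def v_def])
  have c2: "c = (\<lambda>n. u * (ec \<alpha> n * l1 ^ n) + v * (ec \<alpha> n * l2 ^ n))"
    by (subst sd(1)) (simp add: dn fun_eq_iff algebra_simps)
  have s1: "summable (\<lambda>n. ec \<alpha> n * l1 ^ n * complex_of_real t ^ n)"
    by (rule conv_bound[OF assms(1,2) _ exp_bd(1)]) simp
  have s2: "summable (\<lambda>n. ec \<alpha> n * l2 ^ n * complex_of_real t ^ n)"
    by (rule conv_bound[OF assms(1,2) _ exp_bd(1)]) simp
  have "ps_eval c t = u * ps_eval (\<lambda>n. ec \<alpha> n * l1 ^ n) t + v * ps_eval (\<lambda>n. ec \<alpha> n * l2 ^ n) t"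
    by (subst c2) (rule ps_lin(1)[OF s1 s2])
  thus ?thesis unfolding sd(3,4) ps_eval_exp u_def v_def .
qed

lemma repr_double:
  assumes "0 < \<alpha>" "\<alpha> < 1" "a1 = - (l + l)" "a0 = l * l" "is_sol \<alpha> a1 a0 c"
  shows "ps_eval c t = ps_eval c 0 * Ealpha \<alpha> (l * complex_of_real t)
     + (ps_eval (LD \<alpha> c) 0 - l * ps_eval c 0) * complex_of_real t * Ealpha' \<alpha> (l * complex_of_real t)"
proof -
  define d where "d = (\<lambda>n. c n / ec \<alpha> n)"
  have dd: "\<And>n. d n = c n / ec \<alpha> n" by (simp add: d_def)
  note sd = sol_d[OF assms(1,2,3,4,5) dd]
  have dn: "d n = d 0 * l ^ n + (d 1 - l * d 0) * (of_nat n * l ^ (n - 1))" for n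
    by (rule rec_double[where d=d and l=l, OF sd(2)])
  have c2: "c = (\<lambda>n. d 0 * (ec \<alpha> n * l ^ n) + (d 1 - l * d 0) * (ec \<alpha> n * (of_nat n * l ^ (n - 1))))"
    by (subst sd(1)) (subst dn, simp add: fun_eq_iff algebra_simps)
  have s1: "summable (\<lambda>n. ec \<alpha> n * l ^ n * complex_of_real t ^ n)"
    by (rule conv_bound[OF assms(1,2) _ exp_bd(1)]) simp
  have s2: "summable (\<lambda>n. ec \<alpha> n * (of_nat n * l ^ (n - 1)) * complex_of_real t ^ n)"
    by (rule conv_bound[OF assms(1,2) _ q_bd(1)]) simp
  have "ps_eval c t = d 0 * ps_eval (\<lambda>n. ec \<alpha> n * l ^ n) t
      + (d 1 - l * d 0) * ps_eval (\<lambda>n. ec \<alpha> n * (of_nat n * l ^ (n - 1))) t"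
    by (subst c2) (rule ps_lin(1)[OF s1 s2])
  thus ?thesis unfolding sd(3,4) ps_eval_exp ps_eval_texp[OF assms(1,2)] by (simp add: mult.assoc)
qed




lemma uv_id:
  fixes l1 l2 x0 x01 :: complex assumes "l1 \<noteq> l2"
  shows "(x01 - l2 * x0) / (l1 - l2) + (l1 * x0 - x01) / (l1 - l2) = x0"
    "(x01 - l2 * x0) / (l1 - l2) * l1 + (l1 * x0 - x01) / (l1 - l2) * l2 = x01"
proof -
  have nz: "l1 - l2 \<noteq> 0" using assms by simp
  have "(x01 - l2 * x0) / (l1 - l2) + (l1 * x0 - x01) / (l1 - l2) = ((x01 - l2 * x0) + (l1 * x0 - x01)) / (l1 - l2)"
    by (simp only: add_divide_distrib)
  also have "(x01 - l2 * x0) + (l1 * x0 - x01) = x0 * (l1 - l2)" by (simp add: algebra_simps)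
  also have "x0 * (l1 - l2) / (l1 - l2) = x0" by (rule nonzero_mult_div_cancel_right[OF nz])
  finally show "(x01 - l2 * x0) / (l1 - l2) + (l1 * x0 - x01) / (l1 - l2) = x0" .
  have "(x01 - l2 * x0) / (l1 - l2) * l1 + (l1 * x0 - x01) / (l1 - l2) * l2
      = ((x01 - l2 * x0) * l1 + (l1 * x0 - x01) * l2) / (l1 - l2)"
    by (simp only: times_divide_eq_left add_divide_distrib)
  also have "(x01 - l2 * x0) * l1 + (l1 * x0 - x01) * l2 = x01 * (l1 - l2)" by (simp add: algebra_simps)
  also have "x01 * (l1 - l2) / (l1 - l2) = x01" by (rule nonzero_mult_div_cancel_right[OF nz])
  finally show "(x01 - l2 * x0) / (l1 - l2) * l1 + (l1 * x0 - x01) / (l1 - l2) * l2 = x01" .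
qed

lemma in_sol_space: "is_sol \<alpha> a1 a0 c \<Longrightarrow> (\<And>t. 0 \<le> t \<Longrightarrow> f t = ps_eval c t) \<Longrightarrow> f \<in> sol_space \<alpha> a1 a0"
  unfolding sol_space_def by blast

lemma is_sol_conv: "is_sol \<alpha> a1 a0 c \<Longrightarrow> ps_conv c" unfolding is_sol_def by blast

lemma case_distinct:
  assumes a: "0 < \<alpha>" "\<alpha> < 1" and ne: "l1 \<noteq> l2" and a1: "a1 = - (l1 + l2)" and a0: "a0 = l1 * l2"
    and r1: "l1 ^ 2 + a1 * l1 + a0 = 0" and r2: "l2 ^ 2 + a1 * l2 + a0 = 0"
  shows "(\<exists>c. is_ivp_sol \<alpha> a1 a0 x0 x01 c) \<and>
            (\<forall>c. is_ivp_sol \<alpha> a1 a0 x0 x01 c \<longrightarrow>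
               (\<forall>t::real. 0 \<le> t \<longrightarrow> ps_eval c t =
                  (x01 - l2 * x0) / (l1 - l2) * Ealpha \<alpha> (l1 * complex_of_real t)
                + (l1 * x0 - x01) / (l1 - l2) * Ealpha \<alpha> (l2 * complex_of_real t))) \<and>
            is_basis2 (sol_space \<alpha> a1 a0)
              (\<lambda>t. Ealpha \<alpha> (l1 * complex_of_real t)) (\<lambda>t. Ealpha \<alpha> (l2 * complex_of_real t))"
proof (intro conjI)
  have e1: "is_sol \<alpha> a1 a0 (\<lambda>n. ec \<alpha> n * l1 ^ n)" by (rule exp_sol[OF a r1])
  have e2: "is_sol \<alpha> a1 a0 (\<lambda>n. ec \<alpha> n * l2 ^ n)" by (rule exp_sol[OF a r2])
  define u where "u = (x01 - l2 * x0) / (l1 - l2)"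
  define v where "v = (l1 * x0 - x01) / (l1 - l2)"
  let ?c = "\<lambda>n. u * (ec \<alpha> n * l1 ^ n) + v * (ec \<alpha> n * l2 ^ n)"
  have sc: "is_sol \<alpha> a1 a0 ?c" by (rule sol_lin[OF e1 e2])
  have "ps_eval ?c 0 = x0" unfolding ps_eval_0 using uv_id(1)[OF ne, of x01 x0] by (simp add: ec_0 u_def v_def)
  moreover have "ps_eval (LD \<alpha> ?c) 0 = x01"
    unfolding LD_lin LD_ec[OF a(2)] ps_eval_0 using uv_id(2)[OF ne, of x01 x0] by (simp add: ec_0 u_def v_def)
  ultimately show "\<exists>c. is_ivp_sol \<alpha> a1 a0 x0 x01 c" using sc unfolding is_ivp_sol_def by blast
  show "\<forall>c. is_ivp_sol \<alpha> a1 a0 x0 x01 c \<longrightarrow>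
               (\<forall>t::real. 0 \<le> t \<longrightarrow> ps_eval c t =
                  (x01 - l2 * x0) / (l1 - l2) * Ealpha \<alpha> (l1 * complex_of_real t)
                + (l1 * x0 - x01) / (l1 - l2) * Ealpha \<alpha> (l2 * complex_of_real t))"
  proof (intro allI impI)
    fix c t assume "is_ivp_sol \<alpha> a1 a0 x0 x01 c"
    hence s: "is_sol \<alpha> a1 a0 c" "ps_eval c 0 = x0" "ps_eval (LD \<alpha> c) 0 = x01" unfolding is_ivp_sol_def by auto
    show "ps_eval c t = (x01 - l2 * x0) / (l1 - l2) * Ealpha \<alpha> (l1 * complex_of_real t)
                + (l1 * x0 - x01) / (l1 - l2) * Ealpha \<alpha> (l2 * complex_of_real t)"
      using repr_distinct[OF a ne a1 a0 s(1), of t] unfolding s(2,3) .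
  qed
  show "is_basis2 (sol_space \<alpha> a1 a0)
              (\<lambda>t. Ealpha \<alpha> (l1 * complex_of_real t)) (\<lambda>t. Ealpha \<alpha> (l2 * complex_of_real t))"
    unfolding is_basis2_def
  proof (intro conjI allI impI ballI)
    show "(\<lambda>t. Ealpha \<alpha> (l1 * complex_of_real t)) \<in> sol_space \<alpha> a1 a0"
      by (rule in_sol_space[OF e1]) (simp add: ps_eval_exp)
    show "(\<lambda>t. Ealpha \<alpha> (l2 * complex_of_real t)) \<in> sol_space \<alpha> a1 a0"
      by (rule in_sol_space[OF e2]) (simp add: ps_eval_exp)
  next
    fix x assume "x \<in> sol_space \<alpha> a1 a0"
    then obtain c where c: "is_sol \<alpha> a1 a0 c" "\<And>t. 0 \<le> t \<Longrightarrow> x t = ps_eval c t"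
      unfolding sol_space_def by blast
    show "\<exists>u v. \<forall>t. 0 \<le> t \<longrightarrow> x t = u * Ealpha \<alpha> (l1 * complex_of_real t) + v * Ealpha \<alpha> (l2 * complex_of_real t)"
    proof (intro exI allI impI)
      fix t :: real assume t: "0 \<le> t"
      show "x t = (ps_eval (LD \<alpha> c) 0 - l2 * ps_eval c 0) / (l1 - l2) * Ealpha \<alpha> (l1 * complex_of_real t)
         + (l1 * ps_eval c 0 - ps_eval (LD \<alpha> c) 0) / (l1 - l2) * Ealpha \<alpha> (l2 * complex_of_real t)"
        using c(2)[OF t] repr_distinct[OF a ne a1 a0 c(1), of t] by simp
    qed
  next
    fix p q :: complex
    assume H: "\<forall>t. 0 \<le> t \<longrightarrow> p * Ealpha \<alpha> (l1 * complex_of_real t) + q * Ealpha \<alpha> (l2 * complex_of_real t) = 0"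
    let ?b = "\<lambda>n. p * (ec \<alpha> n * l1 ^ n) + q * (ec \<alpha> n * l2 ^ n)"
    have sb: "is_sol \<alpha> a1 a0 ?b" by (rule sol_lin[OF e1 e2])
    have sm: "\<And>z. summable (\<lambda>n. ?b n * z ^ n)" by (rule ps_conv_all[OF is_sol_conv[OF sb]])
    have zr: "(\<Sum>n. ?b n * complex_of_real t ^ n) = 0" if t: "0 \<le> t" for t
    proof -
      have "(\<Sum>n. ?b n * complex_of_real t ^ n) = p * ps_eval (\<lambda>n. ec \<alpha> n * l1 ^ n) t + q * ps_eval (\<lambda>n. ec \<alpha> n * l2 ^ n) t"
        unfolding ps_eval_def[symmetric]
        by (rule ps_lin(1)) (use is_sol_conv[OF e1] is_sol_conv[OF e2] t in \<open>auto simp: ps_conv_def\<close>)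
      also have "\<dots> = 0" using H t by (simp add: ps_eval_exp)
      finally show ?thesis .
    qed
    have b0: "?b 0 = 0" by (rule ps_zero[OF sm zr])
    have b1: "?b 1 = 0" by (rule ps_zero[OF sm zr])
    have pq0: "p + q = 0" using b0 by (simp add: ec_0)
    have "ec \<alpha> 1 * (p * l1 + q * l2) = 0" using b1 by (simp add: algebra_simps)
    hence pq1: "p * l1 + q * l2 = 0" using ec_nz[OF a(2), of 1] by simp
    have qp: "q = - p" using pq0 by (simp add: eq_neg_iff_add_eq_0 add.commute)
    have "p * (l1 - l2) = 0" using pq1 unfolding qp by (simp add: algebra_simps)
    hence "p = 0" using ne by simp
    thus "p = 0" .
    show "q = 0" using qp \<open>p = 0\<close> by simp
  qed
qed

lemma case_double:
  assumes a: "0 < \<alpha>" "\<alpha> < 1" and a1: "a1 = - (l + l)" and a0: "a0 = l * l"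
  shows "(\<exists>c. is_ivp_sol \<alpha> a1 a0 x0 x01 c) \<and>
            (\<forall>c. is_ivp_sol \<alpha> a1 a0 x0 x01 c \<longrightarrow>
               (\<forall>t::real. 0 \<le> t \<longrightarrow> ps_eval c t =
                  x0 * Ealpha \<alpha> (l * complex_of_real t)
                + (x01 - l * x0) * complex_of_real t * Ealpha' \<alpha> (l * complex_of_real t))) \<and>
            is_basis2 (sol_space \<alpha> a1 a0)
              (\<lambda>t. Ealpha \<alpha> (l * complex_of_real t))
              (\<lambda>t. complex_of_real t * Ealpha' \<alpha> (l * complex_of_real t))"
proof (intro conjI)
  have r: "l ^ 2 + a1 * l + a0 = 0" unfolding a1 a0 by (simp add: power2_eq_square algebra_simps)
  have e1: "is_sol \<alpha> a1 a0 (\<lambda>n. ec \<alpha> n * l ^ n)" by (rule exp_sol[OF a r])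
  have e2: "is_sol \<alpha> a1 a0 (\<lambda>n. ec \<alpha> n * (of_nat n * l ^ (n - 1)))" by (rule texp_sol[OF a a1 a0])
  let ?c = "\<lambda>n. x0 * (ec \<alpha> n * l ^ n) + (x01 - l * x0) * (ec \<alpha> n * (of_nat n * l ^ (n - 1)))"
  have sc: "is_sol \<alpha> a1 a0 ?c" by (rule sol_lin[OF e1 e2])
  have "ps_eval ?c 0 = x0" unfolding ps_eval_0 by (simp add: ec_0)
  moreover have "ps_eval (LD \<alpha> ?c) 0 = x01"
    unfolding LD_lin LD_ec[OF a(2)] ps_eval_0 by (simp add: ec_0 algebra_simps)
  ultimately show "\<exists>c. is_ivp_sol \<alpha> a1 a0 x0 x01 c" using sc unfolding is_ivp_sol_def by blast
  show "\<forall>c. is_ivp_sol \<alpha> a1 a0 x0 x01 c \<longrightarrow>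
               (\<forall>t::real. 0 \<le> t \<longrightarrow> ps_eval c t =
                  x0 * Ealpha \<alpha> (l * complex_of_real t)
                + (x01 - l * x0) * complex_of_real t * Ealpha' \<alpha> (l * complex_of_real t))"
  proof (intro allI impI)
    fix c t assume "is_ivp_sol \<alpha> a1 a0 x0 x01 c"
    hence s: "is_sol \<alpha> a1 a0 c" "ps_eval c 0 = x0" "ps_eval (LD \<alpha> c) 0 = x01" unfolding is_ivp_sol_def by auto
    show "ps_eval c t = x0 * Ealpha \<alpha> (l * complex_of_real t)
                + (x01 - l * x0) * complex_of_real t * Ealpha' \<alpha> (l * complex_of_real t)"
      using repr_double[OF a a1 a0 s(1), of t] unfolding s(2,3) .
  qed
  show "is_basis2 (sol_space \<alpha> a1 a0)
              (\<lambda>t. Ealpha \<alpha> (l * complex_of_real t))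
              (\<lambda>t. complex_of_real t * Ealpha' \<alpha> (l * complex_of_real t))"
    unfolding is_basis2_def
  proof (intro conjI allI impI ballI)
    show "(\<lambda>t. Ealpha \<alpha> (l * complex_of_real t)) \<in> sol_space \<alpha> a1 a0"
      by (rule in_sol_space[OF e1]) (simp add: ps_eval_exp)
    show "(\<lambda>t. complex_of_real t * Ealpha' \<alpha> (l * complex_of_real t)) \<in> sol_space \<alpha> a1 a0"
      by (rule in_sol_space[OF e2]) (rule ps_eval_texp[OF a, symmetric])
  next
    fix x assume "x \<in> sol_space \<alpha> a1 a0"
    then obtain c where c: "is_sol \<alpha> a1 a0 c" "\<And>t. 0 \<le> t \<Longrightarrow> x t = ps_eval c t"
      unfolding sol_space_def by blast
    show "\<exists>u v. \<forall>t. 0 \<le> t \<longrightarrow> x t = u * Ealpha \<alpha> (l * complex_of_real t)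
        + v * (complex_of_real t * Ealpha' \<alpha> (l * complex_of_real t))"
    proof (intro exI allI impI)
      fix t :: real assume t: "0 \<le> t"
      have "x t = ps_eval c 0 * Ealpha \<alpha> (l * complex_of_real t)
         + (ps_eval (LD \<alpha> c) 0 - l * ps_eval c 0) * complex_of_real t * Ealpha' \<alpha> (l * complex_of_real t)"
        using c(2)[OF t] repr_double[OF a a1 a0 c(1), of t] by simp
      thus "x t = ps_eval c 0 * Ealpha \<alpha> (l * complex_of_real t)
         + (ps_eval (LD \<alpha> c) 0 - l * ps_eval c 0) * (complex_of_real t * Ealpha' \<alpha> (l * complex_of_real t))"
        by (simp only: mult.assoc)
    qed
  next
    fix p q :: complex
    assume H: "\<forall>t. 0 \<le> t \<longrightarrow> p * Ealpha \<alpha> (l * complex_of_real t) + q * (complex_of_real t * Ealpha' \<alpha> (l * complex_of_real t)) = 0"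
    let ?b = "\<lambda>n. p * (ec \<alpha> n * l ^ n) + q * (ec \<alpha> n * (of_nat n * l ^ (n - 1)))"
    have sb: "is_sol \<alpha> a1 a0 ?b" by (rule sol_lin[OF e1 e2])
    have sm: "\<And>z. summable (\<lambda>n. ?b n * z ^ n)" by (rule ps_conv_all[OF is_sol_conv[OF sb]])
    have zr: "(\<Sum>n. ?b n * complex_of_real t ^ n) = 0" if t: "0 \<le> t" for t
    proof -
      have "(\<Sum>n. ?b n * complex_of_real t ^ n) = p * ps_eval (\<lambda>n. ec \<alpha> n * l ^ n) t
          + q * ps_eval (\<lambda>n. ec \<alpha> n * (of_nat n * l ^ (n - 1))) t"
        unfolding ps_eval_def[symmetric]
        by (rule ps_lin(1)) (use is_sol_conv[OF e1] is_sol_conv[OF e2] t in \<open>auto simp: ps_conv_def\<close>)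
      also have "\<dots> = 0" unfolding ps_eval_exp ps_eval_texp[OF a] using H t by simp
      finally show ?thesis .
    qed
    have b0: "?b 0 = 0" by (rule ps_zero[OF sm zr])
    have b1: "?b 1 = 0" by (rule ps_zero[OF sm zr])
    have p0: "p = 0" using b0 by (simp add: ec_0)
    have "ec \<alpha> 1 * (p * l + q) = 0" using b1 by (simp add: algebra_simps)
    hence "p * l + q = 0" using ec_nz[OF a(2), of 1] by simp
    thus "q = 0" using p0 by simp
    show "p = 0" by (rule p0)
  qed
qed

theorem mainTheorem17:
  fixes \<alpha> :: real and a0 a1 l1 l2 x0 x01 :: complex
  assumes "0 < \<alpha>" and "\<alpha> < 1"
    and roots: "\<forall>z::complex. z ^ 2 + a1 * z + a0 = (z - l1) * (z - l2)"
  shows "(l1 \<noteq> l2 \<longrightarrow>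
            (\<exists>c. is_ivp_sol \<alpha> a1 a0 x0 x01 c) \<and>
            (\<forall>c. is_ivp_sol \<alpha> a1 a0 x0 x01 c \<longrightarrow>
               (\<forall>t::real. 0 \<le> t \<longrightarrow> ps_eval c t =
                  (x01 - l2 * x0) / (l1 - l2) * Ealpha \<alpha> (l1 * complex_of_real t)
                + (l1 * x0 - x01) / (l1 - l2) * Ealpha \<alpha> (l2 * complex_of_real t))) \<and>
            is_basis2 (sol_space \<alpha> a1 a0)
              (\<lambda>t. Ealpha \<alpha> (l1 * complex_of_real t)) (\<lambda>t. Ealpha \<alpha> (l2 * complex_of_real t)))
       \<and> (l1 = l2 \<longrightarrow>
            (\<exists>c. is_ivp_sol \<alpha> a1 a0 x0 x01 c) \<and>
            (\<forall>c. is_ivp_sol \<alpha> a1 a0 x0 x01 c \<longrightarrow>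
               (\<forall>t::real. 0 \<le> t \<longrightarrow> ps_eval c t =
                  x0 * Ealpha \<alpha> (l1 * complex_of_real t)
                + (x01 - l1 * x0) * complex_of_real t * Ealpha' \<alpha> (l1 * complex_of_real t))) \<and>
            is_basis2 (sol_space \<alpha> a1 a0)
              (\<lambda>t. Ealpha \<alpha> (l1 * complex_of_real t))
              (\<lambda>t. complex_of_real t * Ealpha' \<alpha> (l1 * complex_of_real t)))"
proof -
  have A0: "a0 = l1 * l2" using roots[rule_format, of 0] by simp
  have h1: "1 + a1 + a0 = (1 - l1) * (1 - l2)" using roots[rule_format, of 1] by simp
  have "a1 = (1 + a1 + a0) - 1 - a0" by simp
  also have "\<dots> = - (l1 + l2)" unfolding h1 by (simp add: A0 algebra_simps)
  finally have A1: "a1 = - (l1 + l2)" .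
  have r1: "l1 ^ 2 + a1 * l1 + a0 = 0" using roots[rule_format, of l1] by simp
  have r2: "l2 ^ 2 + a1 * l2 + a0 = 0" using roots[rule_format, of l2] by simp
  show ?thesis
  proof (rule conjI; rule impI)
    assume ne: "l1 \<noteq> l2"
    show "(\<exists>c. is_ivp_sol \<alpha> a1 a0 x0 x01 c) \<and>
            (\<forall>c. is_ivp_sol \<alpha> a1 a0 x0 x01 c \<longrightarrow>
               (\<forall>t::real. 0 \<le> t \<longrightarrow> ps_eval c t =
                  (x01 - l2 * x0) / (l1 - l2) * Ealpha \<alpha> (l1 * complex_of_real t)
                + (l1 * x0 - x01) / (l1 - l2) * Ealpha \<alpha> (l2 * complex_of_real t))) \<and>
            is_basis2 (sol_space \<alpha> a1 a0)
              (\<lambda>t. Ealpha \<alpha> (l1 * complex_of_real t)) (\<lambda>t. Ealpha \<alpha> (l2 * complex_of_real t))"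
      by (rule case_distinct[OF assms(1,2) ne A1 A0 r1 r2])
  next
    assume eq: "l1 = l2"
    have A1': "a1 = - (l1 + l1)" using A1 eq by simp
    have A0': "a0 = l1 * l1" using A0 eq by simp
    show "(\<exists>c. is_ivp_sol \<alpha> a1 a0 x0 x01 c) \<and>
            (\<forall>c. is_ivp_sol \<alpha> a1 a0 x0 x01 c \<longrightarrow>
               (\<forall>t::real. 0 \<le> t \<longrightarrow> ps_eval c t =
                  x0 * Ealpha \<alpha> (l1 * complex_of_real t)
                + (x01 - l1 * x0) * complex_of_real t * Ealpha' \<alpha> (l1 * complex_of_real t))) \<and>
            is_basis2 (sol_space \<alpha> a1 a0)
              (\<lambda>t. Ealpha \<alpha> (l1 * complex_of_real t))
              (\<lambda>t. complex_of_real t * Ealpha' \<alpha> (l1 * complex_of_real t))"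
      by (rule case_double[OF assms(1,2) A1' A0'])
  qed
qed


end
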